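(* Let $n\geq1$. If $\psi$ is a Toom cycle in $G=G_{2n}(\mathbb T\ltimes\mathbb N^2)$ or in $G=G_{2n}(\mathbb N^2\ltimes\mathbb N^2)$, then there exists an integer $m\geq1$ such that: - the number of steps of each of the types su, sd, lu, ld, ru, rd in $\psi$ equals $m$; - $\psi$ passes through precisely $m+1$ distinct possible outcomes of the game (elements of $\partial G$).
   Context: **Decision graphs.** - $\mathbb T$ is the set of finite words over $\{1,2\}$ with root $\varnothing$, edges $\mathbf i\to\mathbf ik$, and $|\mathbf i|$ = length. - $\mathbb N^2$ has root $(0,0)$ and edges $(i,j)\to(i,j)1:=(i+1,j)$ and $(i,j)\to(i,j)2:=(i,j+1)$, with $|(i,j)|=i+j$. **Product and game-graph.** For $D^1\in\{\mathbb T,\mathbb N^2\}$, $D^1\ltimes\mathbb N^2$ has as vertices the pairs $(a,b)$ with $|a|=|b|$ (level $2|b|$) or $|a|=|b|+1$ (level $2|b|+1$), root $(0,0)$, edges $(a,b)\to(ak,b)$ from even levels and $(a,b)\to(a,bk)$ from odd levels. $G_{2n}(D^1\ltimes\mathbb N^2)$ is its restriction to levels $\leq 2n$. Level $2n$ is $\partial G$ (possible outcomes); interior vertices at even levels are Alice's turn and those at odd levels are Bob's. Let $\mathring G$ be the non-outcome vertices, $\vec A$ the set of edges $((a,b),(ak,b))$ from Alice-turn vertices, and $\vec B_k$ the set of edges $((a,b),(a,bk))$ from Bob-turn vertices. **Walks and step types.** A walk is $\psi_0\cdots\psi_l$ with each consecutive pair an edge or a reversed edge. The $k$-th step is: - su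 if $(\psi_{k-1},\psi_k)\in\vec A$, and sd if $(\psi_k,\psi_{k-1})\in\vec A$; - lu if $(\psi_{k-1},\psi_k)\in\vec B_2$, and ld if $(\psi_k,\psi_{k-1})\in\vec B_1$; - ru if $(\psi_{k-1},\psi_k)\in\vec B_1$, and rd if $(\psi_k,\psi_{k-1})\in\vec B_2$. Up types are su, lu, ru; down types are sd, ld, rd. Let - $N_\uparrow=\{0\}\cup\{0<k<l:$ steps $k,k+1$ up$\}$, - $N_\circ=\{0<k<l:$ step $k$ down, $k+1$ up$\}$, - $N_\downarrow=\{l\}\cup\{0<k<l:$ both down$\}$, - $N_\ast=\{0<k<l:$ step $k$ up, $k+1$ down$\}$. **Toom cycle.** A Toom cycle is a walk with $l\geq2$ satisfying all of the following. - $\psi_0=\psi_l=$ root; the first step is su or ru; the last step is sd or rd. - For $0<k<l$ with $\psi_k\in\mathring G$, the only allowed (step $k$ $\to$ step $k+1$) combinations are su$\to$ru, ru$\to$su, lu$\to$su, sd$\to$rd or ld, rd$\to$sd, ld$\to$lu. - For $\psi_k\in\partial G$, the only allowed combinations are su$\to$sd, ru$\to$rd or ld, lu$\to$rd or ld. - (i) $\psi_k\neq\psi_m$ for distinct $k,m\in N_\ast$. - (ii) If $\psi_k=\psi_m$ with $k\in N_s$, $m\in N_t$, $s\leq t$ in the order $\uparrow<\circ<\downarrow$, then $k\leq m$. *)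

theory Defs
  imports Main
begin

record 'd dgraph =
  dvert :: "'d set"
  dext  :: "'d \<Rightarrow> nat \<Rightarrow> 'd"
  dlen  :: "'d \<Rightarrow> nat"
  droot :: 'd

definition ext2 :: "nat \<times> nat \<Rightarrow> nat \<Rightarrow> nat \<times> nat" where
  "ext2 p k = (if k = 1 then (fst p + 1, snd p) else (fst p, snd p + 1))"

definition len2 :: "nat \<times> nat \<Rightarrow> nat" where
  "len2 p = fst p + snd p"

definition T_graph :: "nat list dgraph" where
  "T_graph = \<lparr> dvert = {w. set w \<subseteq> {1,2}}, dext = (\<lambda>w k. w @ [k]),
               dlen = length, droot = [] \<rparr>"

definition N2_graph :: "(nat \<times> nat) dgraph" where
  "N2_graph = \<lparr> dvert = UNIV, dext = ext2, dlen = len2, droot = (0,0) \<rparr>"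

type_synonym 'd gvert = "'d \<times> (nat \<times> nat)"

definition lvl :: "'d dgraph \<Rightarrow> 'd gvert \<Rightarrow> nat" where
  "lvl G v = (if dlen G (fst v) = len2 (snd v) then 2 * len2 (snd v)
              else 2 * len2 (snd v) + 1)"

definition verts :: "'d dgraph \<Rightarrow> nat \<Rightarrow> 'd gvert set" where
  "verts G n = {(a,b). a \<in> dvert G \<and> (dlen G a = len2 b \<or> dlen G a = len2 b + 1)
                       \<and> lvl G (a,b) \<le> 2 * n}"

definition groot :: "'d dgraph \<Rightarrow> 'd gvert" where
  "groot G = (droot G, (0,0))"

definition bnd :: "'d dgraph \<Rightarrow> nat \<Rightarrow> 'd gvert set" where
  "bnd G n = {v \<in> verts G n. lvl G v = 2 * n}"

definition inner :: "'d dgraph \<Rightarrow> nat \<Rightarrow> 'd gvert set" where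
  "inner G n = {v \<in> verts G n. lvl G v < 2 * n}"

definition edgesA :: "'d dgraph \<Rightarrow> nat \<Rightarrow> ('d gvert \<times> 'd gvert) set" where
  "edgesA G n = {((a,b), (dext G a k, b)) | a b k.
      (a,b) \<in> inner G n \<and> even (lvl G (a,b)) \<and> k \<in> {1,2} \<and> (dext G a k, b) \<in> verts G n}"

definition edgesB :: "'d dgraph \<Rightarrow> nat \<Rightarrow> nat \<Rightarrow> ('d gvert \<times> 'd gvert) set" where
  "edgesB G n k = {((a,b), (a, ext2 b k)) | a b.
      (a,b) \<in> inner G n \<and> odd (lvl G (a,b)) \<and> (a, ext2 b k) \<in> verts G n}"

definition edges :: "'d dgraph \<Rightarrow> nat \<Rightarrow> ('d gvert \<times> 'd gvert) set" where
  "edges G n = edgesA G n \<union> edgesB G n 1 \<union> edgesB G n 2"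

text \<open>A walk psi_0 ... psi_l is represented as a nonempty list of length l+1.\<close>
definition is_walk :: "'d dgraph \<Rightarrow> nat \<Rightarrow> 'd gvert list \<Rightarrow> bool" where
  "is_walk G n \<psi> \<longleftrightarrow> \<psi> \<noteq> [] \<and> set \<psi> \<subseteq> verts G n \<and>
     (\<forall>k \<in> {1..<length \<psi>}. (\<psi>!(k-1), \<psi>!k) \<in> edges G n \<or> (\<psi>!k, \<psi>!(k-1)) \<in> edges G n)"

datatype stype = SU | SD | LU | LD | RU | RD

text \<open>The k-th step (from psi_{k-1} to psi_k) has type t.\<close>
definition step :: "'d dgraph \<Rightarrow> nat \<Rightarrow> 'd gvert list \<Rightarrow> nat \<Rightarrow> stype \<Rightarrow> bool" where
  "step G n \<psi> k t = (case t of
      SU \<Rightarrow> (\<psi>!(k-1), \<psi>!k) \<in> edgesA G n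
    | SD \<Rightarrow> (\<psi>!k, \<psi>!(k-1)) \<in> edgesA G n
    | LU \<Rightarrow> (\<psi>!(k-1), \<psi>!k) \<in> edgesB G n 2
    | LD \<Rightarrow> (\<psi>!k, \<psi>!(k-1)) \<in> edgesB G n 1
    | RU \<Rightarrow> (\<psi>!(k-1), \<psi>!k) \<in> edgesB G n 1
    | RD \<Rightarrow> (\<psi>!k, \<psi>!(k-1)) \<in> edgesB G n 2)"

definition step_up :: "'d dgraph \<Rightarrow> nat \<Rightarrow> 'd gvert list \<Rightarrow> nat \<Rightarrow> bool" where
  "step_up G n \<psi> k \<longleftrightarrow> step G n \<psi> k SU \<or> step G n \<psi> k LU \<or> step G n \<psi> k RU"

definition step_down :: "'d dgraph \<Rightarrow> nat \<Rightarrow> 'd gvert list \<Rightarrow> nat \<Rightarrow> bool" where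
  "step_down G n \<psi> k \<longleftrightarrow> step G n \<psi> k SD \<or> step G n \<psi> k LD \<or> step G n \<psi> k RD"

text \<open>N_up, N_circ, N_down, N_ast; here l = length psi - 1.\<close>
definition N_up :: "'d dgraph \<Rightarrow> nat \<Rightarrow> 'd gvert list \<Rightarrow> nat set" where
  "N_up G n \<psi> = {0} \<union> {k. 0 < k \<and> k < length \<psi> - 1 \<and> step_up G n \<psi> k \<and> step_up G n \<psi> (k+1)}"

definition N_circ :: "'d dgraph \<Rightarrow> nat \<Rightarrow> 'd gvert list \<Rightarrow> nat set" where
  "N_circ G n \<psi> = {k. 0 < k \<and> k < length \<psi> - 1 \<and> step_down G n \<psi> k \<and> step_up G n \<psi> (k+1)}"

definition N_down :: "'d dgraph \<Rightarrow> nat \<Rightarrow> 'd gvert list \<Rightarrow> nat set" where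
  "N_down G n \<psi> = {length \<psi> - 1} \<union>
     {k. 0 < k \<and> k < length \<psi> - 1 \<and> step_down G n \<psi> k \<and> step_down G n \<psi> (k+1)}"

definition N_ast :: "'d dgraph \<Rightarrow> nat \<Rightarrow> 'd gvert list \<Rightarrow> nat set" where
  "N_ast G n \<psi> = {k. 0 < k \<and> k < length \<psi> - 1 \<and> step_up G n \<psi> k \<and> step_down G n \<psi> (k+1)}"

text \<open>The classes ordered up < circ < down, indexed 0 < 1 < 2.\<close>
definition N_cls :: "'d dgraph \<Rightarrow> nat \<Rightarrow> 'd gvert list \<Rightarrow> nat \<Rightarrow> nat set" where
  "N_cls G n \<psi> i = (if i = 0 then N_up G n \<psi> else if i = 1 then N_circ G n \<psi>
                     else if i = 2 then N_down G n \<psi> else {})"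

definition allowed_inner :: "(stype \<times> stype) set" where
  "allowed_inner = {(SU,RU), (RU,SU), (LU,SU), (SD,RD), (SD,LD), (RD,SD), (LD,LU)}"

definition allowed_bnd :: "(stype \<times> stype) set" where
  "allowed_bnd = {(SU,SD), (RU,RD), (RU,LD), (LU,RD), (LU,LD)}"

definition toom_cycle :: "'d dgraph \<Rightarrow> nat \<Rightarrow> 'd gvert list \<Rightarrow> bool" where
  "toom_cycle G n \<psi> \<longleftrightarrow>
     (let l = length \<psi> - 1 in
      is_walk G n \<psi> \<and> l \<ge> 2 \<and>
      \<psi>!0 = groot G \<and> \<psi>!l = groot G \<and>
      (step G n \<psi> 1 SU \<or> step G n \<psi> 1 RU) \<and>
      (step G n \<psi> l SD \<or> step G n \<psi> l RD) \<and>
      (\<forall>k. 0 < k \<and> k < l \<and> \<psi>!k \<in> inner G n \<longrightarrow>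
          (\<exists>(s,t) \<in> allowed_inner. step G n \<psi> k s \<and> step G n \<psi> (k+1) t)) \<and>
      (\<forall>k. 0 < k \<and> k < l \<and> \<psi>!k \<in> bnd G n \<longrightarrow>
          (\<exists>(s,t) \<in> allowed_bnd. step G n \<psi> k s \<and> step G n \<psi> (k+1) t)) \<and>
      (\<forall>k m. k \<in> N_ast G n \<psi> \<and> m \<in> N_ast G n \<psi> \<and> k \<noteq> m \<longrightarrow> \<psi>!k \<noteq> \<psi>!m) \<and>
      (\<forall>s t k m. s \<le> t \<and> t \<le> 2 \<and> k \<in> N_cls G n \<psi> s \<and> m \<in> N_cls G n \<psi> t \<and>
          \<psi>!k = \<psi>!m \<longrightarrow> k \<le> m))"

definition nsteps :: "'d dgraph \<Rightarrow> nat \<Rightarrow> 'd gvert list \<Rightarrow> stype \<Rightarrow> nat" where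
  "nsteps G n \<psi> t = card {k \<in> {1..length \<psi> - 1}. step G n \<psi> k t}"

end

theory Submission
  imports Defs
begin

lemma len2_ext2[simp]: "len2 (ext2 b k) = Suc (len2 b)"
  by (simp add: len2_def ext2_def)

lemma ext2_ne: "ext2 b 1 \<noteq> ext2 b 2"
  by (simp add: ext2_def prod_eq_iff)

lemma edgesA_lvl:
  assumes H1: "\<And>a k. dlen G (dext G a k) = Suc (dlen G a)"
  and "(x,y) \<in> edgesA G n"
  shows "lvl G y = Suc (lvl G x) \<and> even (lvl G x)"
  using assms(2) unfolding edgesA_def inner_def verts_def lvl_def
  by (auto simp: H1 split: if_splits)

lemma edgesB_lvl:
  assumes "(x,y) \<in> edgesB G n j"
  shows "lvl G y = Suc (lvl G x) \<and> odd (lvl G x)"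
  using assms unfolding edgesB_def inner_def verts_def lvl_def
  by (auto split: if_splits)

lemma tele: "(\<Sum>k\<in>{1..(l::nat)}. (g k - g (k-1)) :: int) = g l - g 0"
  by (induction l) (auto simp: atLeastAtMostSuc_conv)

lemma tele2: "(l::nat) \<ge> 1 \<Longrightarrow> (\<Sum>k\<in>{1..<l}. (g (Suc k) - g k) :: int) = g l - g 1"
proof (induction l)
  case 0 then show ?case by simp
next
  case (Suc l) then show ?case
    by (cases "l = 0") (auto simp: atLeastLessThanSuc)
qed

context
  fixes G :: "'d dgraph" and n :: nat and \<psi> :: "'d gvert list"
  assumes H1: "\<And>a k. dlen G (dext G a k) = Suc (dlen G a)"
begin

definition "up_t t \<longleftrightarrow> t \<in> {SU,LU,RU}"

lemma step_up_lvl: "up_t t \<Longrightarrow> step G n \<psi> k t \<Longrightarrow> lvl G (\<psi>!k) = Suc (lvl G (\<psi>!(k-1)))"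
  by (cases t) (auto simp: up_t_def step_def dest: edgesA_lvl[OF H1] edgesB_lvl)

lemma step_down_lvl: "\<not> up_t t \<Longrightarrow> step G n \<psi> k t \<Longrightarrow> lvl G (\<psi>!(k-1)) = Suc (lvl G (\<psi>!k))"
  by (cases t) (auto simp: up_t_def step_def dest: edgesA_lvl[OF H1] edgesB_lvl)

lemma step_par:
  "(step G n \<psi> k SU \<longrightarrow> even (lvl G (\<psi>!(k-1)))) \<and>
   (step G n \<psi> k LU \<longrightarrow> odd (lvl G (\<psi>!(k-1)))) \<and>
   (step G n \<psi> k RU \<longrightarrow> odd (lvl G (\<psi>!(k-1)))) \<and>
   (step G n \<psi> k SD \<longrightarrow> even (lvl G (\<psi>!k))) \<and>
   (step G n \<psi> k LD \<longrightarrow> odd (lvl G (\<psi>!k))) \<and>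
   (step G n \<psi> k RD \<longrightarrow> odd (lvl G (\<psi>!k)))"
  by (auto simp: step_def dest: edgesA_lvl[OF H1] edgesB_lvl)

lemma excl: "step G n \<psi> k s \<Longrightarrow> step G n \<psi> k t \<Longrightarrow> s = t"
proof (rule ccontr)
  assume a: "step G n \<psi> k s" "step G n \<psi> k t" "s \<noteq> t"
  show False
  proof (cases "up_t s = up_t t")
    case False then show False
    proof (cases "up_t s")
      case True
      then show False using False step_up_lvl[OF True a(1)] step_down_lvl[of t k] a(2) by simp
    next
      case f2: False
      then show False using False step_down_lvl[OF f2 a(1)] step_up_lvl[of t k] a(2) by simp
    qed
  next
    case True
    then show False using a step_par[of k] ext2_ne
      by (cases s; cases t; auto simp: up_t_def step_def edgesB_def ext2_def)
  qed
qed

lemma delta: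
  assumes "step G n \<psi> k t"
  shows "int (dlen G (fst (\<psi>!k))) - int (dlen G (fst (\<psi>!(k-1)))) = (if t=SU then 1 else if t=SD then -1 else 0)"
    "int (fst (snd (\<psi>!k))) - int (fst (snd (\<psi>!(k-1)))) = (if t=RU then 1 else if t=LD then -1 else 0)"
    "int (snd (snd (\<psi>!k))) - int (snd (snd (\<psi>!(k-1)))) = (if t=LU then 1 else if t=RD then -1 else 0)"
  using assms by (cases t; auto simp: step_def edgesA_def edgesB_def ext2_def H1)+

end

lemma main:
  fixes G :: "'d dgraph" and n :: nat and \<psi> :: "'d gvert list"
  assumes H1: "\<And>a k. dlen G (dext G a k) = Suc (dlen G a)"
  and H2: "dlen G (droot G) = 0"
  and n1: "n \<ge> 1"
  and tc: "toom_cycle G n \<psi>"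
  shows "\<exists>m \<ge> 1. (\<forall>t. nsteps G n \<psi> t = m) \<and> card (set \<psi> \<inter> bnd G n) = m + 1"
proof -
  define l where "l = length \<psi> - 1"
  note ex = excl[OF H1]
  note tcu = tc[unfolded toom_cycle_def Let_def, folded l_def]
  note c2 = tcu[THEN conjunct2] note c3 = c2[THEN conjunct2] note c4 = c3[THEN conjunct2]
  note c5 = c4[THEN conjunct2] note c6 = c5[THEN conjunct2] note c7 = c6[THEN conjunct2]
  note c8 = c7[THEN conjunct2] note c9 = c8[THEN conjunct2]
  have walk: "is_walk G n \<psi>" by (rule tcu[THEN conjunct1])
  have l2: "l \<ge> 2" by (rule c2[THEN conjunct1])
  have r0: "\<psi>!0 = groot G" by (rule c3[THEN conjunct1])
  have rl: "\<psi>!l = groot G" by (rule c4[THEN conjunct1])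
  have first: "step G n \<psi> 1 SU \<or> step G n \<psi> 1 RU" by (rule c5[THEN conjunct1])
  have last: "step G n \<psi> l SD \<or> step G n \<psi> l RD" by (rule c6[THEN conjunct1])
  have inn: "\<And>k. 0 < k \<Longrightarrow> k < l \<Longrightarrow> \<psi>!k \<in> inner G n \<Longrightarrow>
          (\<exists>(s,t) \<in> allowed_inner. step G n \<psi> k s \<and> step G n \<psi> (k+1) t)"
    using c7[THEN conjunct1] by blast
  have bd: "\<And>k. 0 < k \<Longrightarrow> k < l \<Longrightarrow> \<psi>!k \<in> bnd G n \<Longrightarrow>
          (\<exists>(s,t) \<in> allowed_bnd. step G n \<psi> k s \<and> step G n \<psi> (k+1) t)"
    using c8[THEN conjunct1] by blast
  have ast: "\<And>k m. k \<in> N_ast G n \<psi> \<Longrightarrow> m \<in> N_ast G n \<psi> \<Longrightarrow> k \<noteq> m \<Longrightarrow> \<psi>!k \<noteq> \<psi>!m"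
    using c9[THEN conjunct1] by blast
  have len: "length \<psi> = Suc l" using walk l2 unfolding is_walk_def l_def by auto
  have vert: "\<psi>!i \<in> verts G n" if "i \<le> l" for i
    using walk that len unfolding is_walk_def by auto
  have lvle: "lvl G (\<psi>!i) \<le> 2*n" if "i \<le> l" for i
    using vert[OF that] unfolding verts_def by auto
  have bnd_iff: "\<psi>!i \<in> bnd G n \<longleftrightarrow> lvl G (\<psi>!i) = 2*n" if "i \<le> l" for i
    using vert[OF that] unfolding bnd_def by auto
  have inner_iff: "\<psi>!i \<in> inner G n \<longleftrightarrow> lvl G (\<psi>!i) < 2*n" if "i \<le> l" for i
    using vert[OF that] unfolding inner_def by auto
  have lvl0: "lvl G (groot G) = 0" using H2 by (simp add: lvl_def groot_def len2_def)
  have some: "\<exists>t. step G n \<psi> k t" if "1 \<le> k" "k \<le> l" for k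
  proof -
    have "(\<psi>!(k-1), \<psi>!k) \<in> edges G n \<or> (\<psi>!k, \<psi>!(k-1)) \<in> edges G n"
      using walk that len unfolding is_walk_def by auto
    then consider "(\<psi>!(k-1), \<psi>!k) \<in> edgesA G n" | "(\<psi>!(k-1), \<psi>!k) \<in> edgesB G n 1"
      | "(\<psi>!(k-1), \<psi>!k) \<in> edgesB G n 2" | "(\<psi>!k, \<psi>!(k-1)) \<in> edgesA G n"
      | "(\<psi>!k, \<psi>!(k-1)) \<in> edgesB G n 1" | "(\<psi>!k, \<psi>!(k-1)) \<in> edgesB G n 2"
      unfolding edges_def by blast
    then show ?thesis
    proof cases
      case 1 then show ?thesis by (intro exI[of _ SU]) (simp add: step_def)
    next
      case 2 then show ?thesis by (intro exI[of _ RU]) (simp add: step_def)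
    next
      case 3 then show ?thesis by (intro exI[of _ LU]) (simp add: step_def)
    next
      case 4 then show ?thesis by (intro exI[of _ SD]) (simp add: step_def)
    next
      case 5 then show ?thesis by (intro exI[of _ LD]) (simp add: step_def)
    next
      case 6 then show ?thesis by (intro exI[of _ RD]) (simp add: step_def)
    qed
  qed
  have s1: "step G n \<psi> 1 SU"
  proof -
    have "\<not> step G n \<psi> 1 RU" using step_par[OF H1, of n \<psi> 1] r0 lvl0 by auto
    then show ?thesis using first by blast
  qed
  have notl: "\<not> step G n \<psi> l t" if "t \<notin> {SD,RD}" for t
    using last that ex by blast
  have not1: "\<not> step G n \<psi> 1 t" if "t \<noteq> SU" for t
    using s1 that ex by blast
  define S where "S t = {k \<in> {1..l}. step G n \<psi> k t}" for t
  have nst: "nsteps G n \<psi> t = card (S t)" for t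
    unfolding nsteps_def S_def l_def by simp
  have finS: "finite (S t)" for t unfolding S_def by simp
  have ob: "of_bool (step G n \<psi> k t) = (of_bool (t = t') :: int)" if "step G n \<psi> k t'" for k t t'
  proof (cases "t = t'")
    case True thus ?thesis using that by simp
  next
    case False then have "\<not> step G n \<psi> k t" using ex[OF that] by metis
    thus ?thesis using False by simp
  qed
  have telesc: "int (card (S t1)) - int (card (S t2)) = 0"
    if d: "\<And>k t. k \<in> {1..l} \<Longrightarrow> step G n \<psi> k t \<Longrightarrow> g k - g (k-1) = (if t=t1 then 1 else if t=t2 then -1 else 0)"
    and t12: "t1 \<noteq> t2" and g0: "g l = g 0" for g :: "nat \<Rightarrow> int" and t1 t2
  proof -
    have "(\<Sum>k\<in>{1..l}. g k - g (k-1)) = (\<Sum>k\<in>{1..l}. of_bool (step G n \<psi> k t1) - of_bool (step G n \<psi> k t2))"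
    proof (rule sum.cong)
      fix k assume k: "k \<in> {1..l}"
      then obtain t where t: "step G n \<psi> k t" using some by auto
      show "g k - g (k-1) = of_bool (step G n \<psi> k t1) - of_bool (step G n \<psi> k t2)"
        using d[OF k t] t12 by (simp add: ob[OF t])
    qed simp
    also have "\<dots> = int (card (S t1)) - int (card (S t2))"
    proof -
      have "S t = {1..l} \<inter> {k. step G n \<psi> k t}" for t by (auto simp: S_def)
      then show ?thesis by (simp add: sum_subtractf)
    qed
    finally show ?thesis using tele[where l=l and g=g] g0 by simp
  qed
  have e1: "card (S SU) = card (S SD)"
  proof -
    have "int (card (S SU)) - int (card (S SD)) = 0"
      by (rule telesc[of "\<lambda>k. int (dlen G (fst (\<psi>!k)))"]) (use delta(1)[OF H1] r0 rl in auto)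
    then show ?thesis by simp
  qed
  have e2: "card (S RU) = card (S LD)"
  proof -
    have "int (card (S RU)) - int (card (S LD)) = 0"
      by (rule telesc[of "\<lambda>k. int (fst (snd (\<psi>!k)))"]) (use delta(2)[OF H1] r0 rl in auto)
    then show ?thesis by simp
  qed
  have e3: "card (S LU) = card (S RD)"
  proof -
    have "int (card (S LU)) - int (card (S RD)) = 0"
      by (rule telesc[of "\<lambda>k. int (snd (snd (\<psi>!k)))"]) (use delta(3)[OF H1] r0 rl in auto)
    then show ?thesis by simp
  qed
  have odd_inner: "\<psi>!i \<in> inner G n" if a: "i \<le> l" and b: "odd (lvl G (\<psi>!i))" for i
    using inner_iff[OF a] lvle[OF a] b by (cases "lvl G (\<psi>!i) = 2*n") auto
  have nxt: "\<exists>t. (s0,t) \<in> allowed_inner \<and> step G n \<psi> (Suc k) t"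
    if h: "0 < k" "k < l" "\<psi>!k \<in> inner G n" "step G n \<psi> k s0" for k s0
  proof -
    obtain s t where "(s,t) \<in> allowed_inner" "step G n \<psi> k s" "step G n \<psi> (k+1) t"
      using inn[OF h(1-3)] by auto
    then show ?thesis using ex[OF h(4)] by auto
  qed
  have prv: "\<exists>s. (s,t0) \<in> allowed_inner \<and> step G n \<psi> k s"
    if h: "0 < k" "k < l" "\<psi>!k \<in> inner G n" "step G n \<psi> (Suc k) t0" for k t0
  proof -
    obtain s t where "(s,t) \<in> allowed_inner" "step G n \<psi> k s" "step G n \<psi> (k+1) t"
      using inn[OF h(1-3)] by auto
    then show ?thesis using ex[OF h(4)] by auto
  qed
  have upSU: "up_t SU" "up_t RU" "up_t LU" and dnSD: "\<not> up_t SD" "\<not> up_t RD" "\<not> up_t LD"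
    by (simp_all add: up_t_def[OF H1])
  have b1: "S RU = Suc ` S SU"
  proof
    show "Suc ` S SU \<subseteq> S RU"
    proof
      fix j assume "j \<in> Suc ` S SU"
      then obtain k where j: "j = Suc k" and k: "k \<in> {1..l}" "step G n \<psi> k SU" unfolding S_def by auto
      have kl: "k < l" using k notl[of SU] by (cases "k = l") auto
      have "odd (lvl G (\<psi>!k))"
        using step_up_lvl[OF H1 upSU(1) k(2)] step_par[OF H1, of n \<psi> k] k(2) by simp
      then have "\<psi>!k \<in> inner G n" using odd_inner kl by simp
      moreover have "0 < k" using k by simp
      ultimately obtain t where t: "(SU,t) \<in> allowed_inner" "step G n \<psi> (Suc k) t" using nxt[OF _ kl _ k(2)] by blast
      from t(1) have "t = RU" unfolding allowed_inner_def by simp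
      then show "j \<in> S RU" using j kl t(2) unfolding S_def by simp
    qed
  next
    show "S RU \<subseteq> Suc ` S SU"
    proof
      fix j assume "j \<in> S RU"
      then have j: "j \<in> {1..l}" "step G n \<psi> j RU" unfolding S_def by auto
      have "j \<noteq> 1" using j not1[of RU] by auto
      then obtain k where jk: "j = Suc k" and k: "0 < k" "k < l" using j by (cases j) auto
      have "odd (lvl G (\<psi>!k))" using step_par[OF H1, of n \<psi> j] j jk by simp
      then have "\<psi>!k \<in> inner G n" using odd_inner k by simp
      then obtain s where s: "(s,RU) \<in> allowed_inner" "step G n \<psi> k s" using prv[OF k(1) k(2) _] j(2) jk by blast
      from s(1) have "s = SU" unfolding allowed_inner_def by simp
      then have "k \<in> S SU" using k s(2) unfolding S_def by simp
      then show "j \<in> Suc ` S SU" using jk by simp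
    qed
  qed
  have b2: "S LU = Suc ` S LD"
  proof
    show "Suc ` S LD \<subseteq> S LU"
    proof
      fix j assume "j \<in> Suc ` S LD"
      then obtain k where j: "j = Suc k" and k: "k \<in> {1..l}" "step G n \<psi> k LD" unfolding S_def by auto
      have kl: "k < l" using k notl[of LD] by (cases "k = l") auto
      have "odd (lvl G (\<psi>!k))" using step_par[OF H1, of n \<psi> k] k(2) by simp
      then have "\<psi>!k \<in> inner G n" using odd_inner kl by simp
      moreover have "0 < k" using k by simp
      ultimately obtain t where t: "(LD,t) \<in> allowed_inner" "step G n \<psi> (Suc k) t" using nxt[OF _ kl _ k(2)] by blast
      from t(1) have "t = LU" unfolding allowed_inner_def by simp
      then show "j \<in> S LU" using j kl t(2) unfolding S_def by simp
    qed
  next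
    show "S LU \<subseteq> Suc ` S LD"
    proof
      fix j assume "j \<in> S LU"
      then have j: "j \<in> {1..l}" "step G n \<psi> j LU" unfolding S_def by auto
      have "j \<noteq> 1" using j not1[of LU] by auto
      then obtain k where jk: "j = Suc k" and k: "0 < k" "k < l" using j by (cases j) auto
      have "odd (lvl G (\<psi>!k))" using step_par[OF H1, of n \<psi> j] j jk by simp
      then have "\<psi>!k \<in> inner G n" using odd_inner k by simp
      then obtain s where s: "(s,LU) \<in> allowed_inner" "step G n \<psi> k s" using prv[OF k(1) k(2) _] j(2) jk by blast
      from s(1) have "s = LD" unfolding allowed_inner_def by simp
      then have "k \<in> S LD" using k s(2) unfolding S_def by simp
      then show "j \<in> Suc ` S LD" using jk by simp
    qed
  qed
  have c1: "card (S RU) = card (S SU)" unfolding b1 by (simp add: card_image)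
  have c2: "card (S LU) = card (S LD)" unfolding b2 by (simp add: card_image)
  define m where "m = card (S SU)"
  have allm: "nsteps G n \<psi> t = m" for t
    using e1 e2 e3 c1 c2 unfolding nst m_def by (cases t) auto
  have m1: "m \<ge> 1"
  proof -
    have "1 \<in> S SU" using s1 l2 unfolding S_def by auto
    then show ?thesis unfolding m_def using finS[of SU] by (metis One_nat_def Suc_leI card_gt_0_iff empty_iff)
  qed
  have ud_ex: False if "step_up G n \<psi> k" "step_down G n \<psi> k" for k
    using that unfolding step_up_def step_down_def
    by (metis ex stype.distinct)
  have dn_iff: "step_down G n \<psi> k \<longleftrightarrow> \<not> step_up G n \<psi> k" if kk: "k \<in> {1..l}" for k
  proof -
    obtain t where t: "step G n \<psi> k t" using some kk by auto
    show ?thesis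
    proof (cases t)
      case SU then show ?thesis using t ud_ex step_up_def by blast next
      case LU then show ?thesis using t ud_ex step_up_def by blast next
      case RU then show ?thesis using t ud_ex step_up_def by blast next
      case SD then show ?thesis using t ud_ex step_down_def by blast next
      case LD then show ?thesis using t ud_ex step_down_def by blast next
      case RD then show ?thesis using t ud_ex step_down_def by blast
    qed
  qed
  have lenl: "length \<psi> - 1 = l" using len by simp
  have upt_iff: "s \<in> {SU,LU,RU} \<Longrightarrow> step G n \<psi> k s \<Longrightarrow> step_up G n \<psi> k" for s k
    unfolding step_up_def by auto
  have dnt_iff: "s \<in> {SD,LD,RD} \<Longrightarrow> step G n \<psi> k s \<Longrightarrow> step_down G n \<psi> k" for s k
    unfolding step_down_def by auto
  have circ: "N_circ G n \<psi> = S LD"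
  proof
    show "N_circ G n \<psi> \<subseteq> S LD"
    proof
      fix k assume "k \<in> N_circ G n \<psi>"
      then have k: "0 < k" "k < l" "step_down G n \<psi> k" "step_up G n \<psi> (Suc k)"
        unfolding N_circ_def lenl by auto
      have "\<psi>!k \<in> verts G n" using vert k by simp
      then have "\<psi>!k \<in> inner G n \<or> \<psi>!k \<in> bnd G n" unfolding inner_def bnd_def verts_def by auto
      then obtain s t where st: "(s,t) \<in> allowed_inner \<union> allowed_bnd" "step G n \<psi> k s" "step G n \<psi> (Suc k) t"
        using inn[OF k(1,2)] bd[OF k(1,2)] by fastforce
      have "s = LD"
      proof (rule ccontr)
        assume "s \<noteq> LD"
        with st(1) have "s \<in> {SU,LU,RU} \<or> t \<in> {SD,LD,RD}" unfolding allowed_inner_def allowed_bnd_def by auto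
        then show False using upt_iff[OF _ st(2)] dnt_iff[OF _ st(3)] ud_ex k(3,4) by blast
      qed
      then show "k \<in> S LD" using st(2) k unfolding S_def by simp
    qed
  next
    show "S LD \<subseteq> N_circ G n \<psi>"
    proof
      fix k assume "k \<in> S LD"
      then have k: "k \<in> {1..l}" "step G n \<psi> k LD" unfolding S_def by auto
      have kl: "k < l" using k notl[of LD] by (cases "k = l") auto
      have "odd (lvl G (\<psi>!k))" using step_par[OF H1, of n \<psi> k] k(2) by simp
      then have "\<psi>!k \<in> inner G n" using odd_inner kl by simp
      moreover have "0 < k" using k by simp
      ultimately obtain t where t: "(LD,t) \<in> allowed_inner" "step G n \<psi> (Suc k) t" using nxt[OF _ kl _ k(2)] by blast
      from t(1) have "t = LU" unfolding allowed_inner_def by simp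
      then have "step_up G n \<psi> (Suc k)" using t(2) unfolding step_up_def by simp
      moreover have "step_down G n \<psi> k" using k(2) unfolding step_down_def by simp
      ultimately show "k \<in> N_circ G n \<psi>" using kl \<open>0 < k\<close> unfolding N_circ_def lenl by simp
    qed
  qed
  have astb: "N_ast G n \<psi> = {k. 0 < k \<and> k < l \<and> \<psi>!k \<in> bnd G n}"
  proof
    show "N_ast G n \<psi> \<subseteq> {k. 0 < k \<and> k < l \<and> \<psi>!k \<in> bnd G n}"
    proof
      fix k assume "k \<in> N_ast G n \<psi>"
      then have k: "0 < k" "k < l" "step_up G n \<psi> k" "step_down G n \<psi> (Suc k)"
        unfolding N_ast_def lenl by auto
      have "\<psi>!k \<in> bnd G n"
      proof (rule ccontr)
        assume "\<psi>!k \<notin> bnd G n"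
        moreover have "\<psi>!k \<in> verts G n" using vert k by simp
        ultimately have "\<psi>!k \<in> inner G n" unfolding inner_def bnd_def verts_def by auto
        then obtain s t where st: "(s,t) \<in> allowed_inner" "step G n \<psi> k s" "step G n \<psi> (Suc k) t"
          using inn[OF k(1,2)] by fastforce
        from st(1) have "s \<in> {SD,LD,RD} \<or> t \<in> {SU,LU,RU}" unfolding allowed_inner_def by auto
        then show False using dnt_iff[OF _ st(2)] upt_iff[OF _ st(3)] ud_ex k(3,4) by blast
      qed
      then show "k \<in> {k. 0 < k \<and> k < l \<and> \<psi>!k \<in> bnd G n}" using k by simp
    qed
  next
    show "{k. 0 < k \<and> k < l \<and> \<psi>!k \<in> bnd G n} \<subseteq> N_ast G n \<psi>"
    proof
      fix k assume "k \<in> {k. 0 < k \<and> k < l \<and> \<psi>!k \<in> bnd G n}"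
      then have k: "0 < k" "k < l" "\<psi>!k \<in> bnd G n" by auto
      then obtain s t where st: "(s,t) \<in> allowed_bnd" "step G n \<psi> k s" "step G n \<psi> (Suc k) t"
        using bd[OF k(1,2)] by fastforce
      from st(1) have "s \<in> {SU,LU,RU}" "t \<in> {SD,LD,RD}" unfolding allowed_bnd_def by auto
      then show "k \<in> N_ast G n \<psi>" using upt_iff[OF _ st(2)] dnt_iff[OF _ st(3)] k unfolding N_ast_def lenl by auto
    qed
  qed
  have cnt: "int (card (N_circ G n \<psi>)) - int (card (N_ast G n \<psi>)) = -1"
  proof -
    define g where "g k = (of_bool (step_up G n \<psi> k) :: int)" for k
    have "(\<Sum>k\<in>{1..<l}. g (Suc k) - g k) = (\<Sum>k\<in>{1..<l}. of_bool (k \<in> N_circ G n \<psi>) - of_bool (k \<in> N_ast G n \<psi>))"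
    proof (rule sum.cong)
      fix k assume k: "k \<in> {1..<l}"
      have d1: "step_down G n \<psi> k \<longleftrightarrow> \<not> step_up G n \<psi> k" using dn_iff k by simp
      have d2: "step_down G n \<psi> (Suc k) \<longleftrightarrow> \<not> step_up G n \<psi> (Suc k)" using dn_iff k by simp
      show "g (Suc k) - g k = of_bool (k \<in> N_circ G n \<psi>) - of_bool (k \<in> N_ast G n \<psi>)"
        using k d1 d2 unfolding g_def N_circ_def N_ast_def lenl by auto
    qed simp
    also have "\<dots> = int (card (N_circ G n \<psi>)) - int (card (N_ast G n \<psi>))"
    proof -
      have "N_circ G n \<psi> = {1..<l} \<inter> {k. k \<in> N_circ G n \<psi>}" unfolding N_circ_def lenl by auto
      moreover have "N_ast G n \<psi> = {1..<l} \<inter> {k. k \<in> N_ast G n \<psi>}" unfolding N_ast_def lenl by auto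
      ultimately show ?thesis by (simp add: sum_subtractf)
    qed
    finally have "int (card (N_circ G n \<psi>)) - int (card (N_ast G n \<psi>)) = g l - g 1"
      using tele2[where l=l and g=g] l2 by simp
    moreover have "g l = 0"
    proof -
      have "step_down G n \<psi> l" using last unfolding step_down_def by auto
      then show ?thesis unfolding g_def using ud_ex by auto
    qed
    moreover have "g 1 = 1" using s1 unfolding g_def step_up_def by simp
    ultimately show ?thesis by simp
  qed
  have root_nb: "groot G \<notin> bnd G n" using lvl0 n1 unfolding bnd_def by auto
  have setb: "set \<psi> \<inter> bnd G n = (\<lambda>k. \<psi>!k) ` N_ast G n \<psi>"
  proof
    show "set \<psi> \<inter> bnd G n \<subseteq> (\<lambda>k. \<psi>!k) ` N_ast G n \<psi>"
    proof
      fix x assume x: "x \<in> set \<psi> \<inter> bnd G n"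
      then obtain k where k: "k < length \<psi>" "x = \<psi>!k" by (auto simp: in_set_conv_nth)
      have xb: "\<psi>!k \<in> bnd G n" using x k by simp
      have "k \<noteq> 0" using xb r0 root_nb by (cases "k = 0") auto
      moreover have "k \<noteq> l" using xb rl root_nb by (cases "k = l") auto
      ultimately have "k \<in> N_ast G n \<psi>" using k x len unfolding astb by auto
      then show "x \<in> (\<lambda>k. \<psi>!k) ` N_ast G n \<psi>" using k by auto
    qed
  next
    show "(\<lambda>k. \<psi>!k) ` N_ast G n \<psi> \<subseteq> set \<psi> \<inter> bnd G n"
      unfolding astb using len by auto
  qed
  have "inj_on (\<lambda>k. \<psi>!k) (N_ast G n \<psi>)" using ast unfolding inj_on_def by blast
  then have "card (set \<psi> \<inter> bnd G n) = card (N_ast G n \<psi>)" unfolding setb by (rule card_image)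
  also have "\<dots> = m + 1" using cnt circ e2 c1 unfolding m_def by simp
  finally show ?thesis using allm m1 by blast
qed

theorem lemma11:
  fixes n :: nat
  assumes "n \<ge> 1"
  shows "(\<forall>\<psi>. toom_cycle T_graph n \<psi> \<longrightarrow>
            (\<exists>m \<ge> 1. (\<forall>t. nsteps T_graph n \<psi> t = m) \<and>
                     card (set \<psi> \<inter> bnd T_graph n) = m + 1)) \<and>
         (\<forall>\<psi>. toom_cycle N2_graph n \<psi> \<longrightarrow>
            (\<exists>m \<ge> 1. (\<forall>t. nsteps N2_graph n \<psi> t = m) \<and>
                     card (set \<psi> \<inter> bnd N2_graph n) = m + 1))"
proof (intro conjI allI impI)
  fix \<psi> assume "toom_cycle T_graph n \<psi>"
  then show "\<exists>m \<ge> 1. (\<forall>t. nsteps T_graph n \<psi> t = m) \<and> card (set \<psi> \<inter> bnd T_graph n) = m + 1"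
    by (rule main[rotated 3]) (use assms in \<open>auto simp: T_graph_def\<close>)
next
  fix \<psi> assume "toom_cycle N2_graph n \<psi>"
  then show "\<exists>m \<ge> 1. (\<forall>t. nsteps N2_graph n \<psi> t = m) \<and> card (set \<psi> \<inter> bnd N2_graph n) = m + 1"
    by (rule main[rotated 3]) (use assms in \<open>auto simp: N2_graph_def len2_def ext2_def\<close>)
qed

end
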